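(* Let $\pi(m)=(1/2)^m$ for $m\in\mathbb{N}^+$ (and $0$ otherwise), and let the proposal be $q(m,\{m+1\})=\theta=1-q(m,\{m-1\})$ for $m\in\mathbb{Z}$, $\theta\in(0,1)$. For $m\in\mathbb{N}^+$ and $N\in\mathbb{N}^+$ let the weights be $$W_{m,N}=\frac{b_m-\varepsilon_m}{N}\,\mathrm{Bin}(N,s_m)+\varepsilon_m,$$ where $b_m>1$, $\varepsilon_m\in(0,1]$, $\mathrm{Bin}(N,s)$ is a binomial random variable with parameters $N$ and $s$, and $s_m=\frac{1-\varepsilon_m}{b_m-\varepsilon_m}$ so that $\mathbb{E}[W_{m,N}]=1$. Suppose $b_m\to\infty$, $\varepsilon_m\to0$ as $m\to\infty$ and $\lim_{m\to\infty}\frac{\varepsilon_{m-1}}{\varepsilon_m}=l$ with $l\in\mathbb{R}^+\cup\{+\infty\}$. Then for every $N\in\mathbb{N}^+$ the chain generated by the noisy kernel $\tilde P_N$ is geometrically ergodic.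
   Context: Noisy Metropolis–Hastings kernel $\tilde P_N$: from state $m$, propose $Y\sim q(m,\cdot)$, draw independent weights $W\sim Q_{m,N}$, $U\sim Q_{Y,N}$ (the laws of $W_{m,N}$, $W_{Y,N}$), and move to $Y$ with probability $\min\{1,\frac{\pi(Y)q(Y,m)}{\pi(m)q(m,Y)}\cdot\frac{U}{W}\}$, otherwise stay at $m$ (proposals outside $\mathbb{N}^+$ are rejected). A $\varphi$-irreducible aperiodic chain with kernel $K$ is geometrically ergodic if it has an invariant probability distribution $\mu$ and there exist finite $V\ge1$, $\tau<1$, $R<\infty$ with $\|K^n(x,\cdot)-\mu\|_{TV}\le RV(x)\tau^n$ for all $x,n$. *)

theory Defs
  imports "HOL-Probability.Probability"
begin

definition pi_geom :: "int \<Rightarrow> real" where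
  "pi_geom y = (if y \<ge> 1 then (1/2) ^ nat y else 0)"

definition q_rw :: "real \<Rightarrow> int \<Rightarrow> int \<Rightarrow> real" where
  "q_rw \<theta> x y = (if y = x + 1 then \<theta> else if y = x - 1 then 1 - \<theta> else 0)"

definition weight_pmf :: "(nat \<Rightarrow> real) \<Rightarrow> (nat \<Rightarrow> real) \<Rightarrow> nat \<Rightarrow> nat \<Rightarrow> real pmf" where
  "weight_pmf b \<epsilon> N m =
     map_pmf (\<lambda>k. (b m - \<epsilon> m) / real N * real k + \<epsilon> m)
             (binomial_pmf N ((1 - \<epsilon> m) / (b m - \<epsilon> m)))"

text \<open>Noisy Metropolis--Hastings kernel on the state space N+ (state 0 is outside the
  state space; it is made absorbing only so that the kernel is total).\<close>
definition noisy_mh :: "real \<Rightarrow> (nat \<Rightarrow> real) \<Rightarrow> (nat \<Rightarrow> real) \<Rightarrow> nat \<Rightarrow> nat \<Rightarrow> nat pmf" where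
  "noisy_mh \<theta> b \<epsilon> N m =
    (if m = 0 then return_pmf 0 else
     bind_pmf (bernoulli_pmf \<theta>) (\<lambda>up.
       let y = (if up then int m + 1 else int m - 1) in
       if y \<le> 0 then return_pmf m else
       bind_pmf (weight_pmf b \<epsilon> N m) (\<lambda>w.
       bind_pmf (weight_pmf b \<epsilon> N (nat y)) (\<lambda>u.
       bind_pmf (bernoulli_pmf
                  (min 1 ((pi_geom y * q_rw \<theta> y (int m)) / (pi_geom (int m) * q_rw \<theta> (int m) y)
                          * (u / w)))) (\<lambda>acc.
       return_pmf (if acc then nat y else m))))))"

primrec kpow :: "('a \<Rightarrow> 'a pmf) \<Rightarrow> nat \<Rightarrow> 'a \<Rightarrow> 'a pmf" where
  "kpow K 0 x = return_pmf x"
| "kpow K (Suc n) x = bind_pmf (kpow K n x) K"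

definition tv_dist :: "'a pmf \<Rightarrow> 'a pmf \<Rightarrow> real" where
  "tv_dist p q = (SUP A. \<bar>measure_pmf.prob p A - measure_pmf.prob q A\<bar>)"

definition geometrically_ergodic :: "'a set \<Rightarrow> ('a \<Rightarrow> 'a pmf) \<Rightarrow> bool" where
  "geometrically_ergodic S K \<longleftrightarrow>
     (\<exists>\<mu>. set_pmf \<mu> \<subseteq> S \<and> bind_pmf \<mu> K = \<mu> \<and>
        (\<exists>(V::'a \<Rightarrow> real) (\<tau>::real) (R::real). (\<forall>x\<in>S. V x \<ge> 1) \<and> \<tau> < 1 \<and>
            (\<forall>x\<in>S. \<forall>n. tv_dist (kpow K n x) \<mu> \<le> R * V x * \<tau> ^ n)))"

end

theory Submission
  imports Defs
begin

lemma measure_bind_pmf':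
  "measure (measure_pmf (bind_pmf M N)) X = (\<integral>x. measure (measure_pmf (N x)) X \<partial>measure_pmf M)"
proof -
  have int: "integrable (measure_pmf M) (\<lambda>x. measure (measure_pmf (N x)) X)"
    by (intro measure_pmf.integrable_const_bound[where B=1]) auto
  have "emeasure (measure_pmf (bind_pmf M N)) X = (\<integral>\<^sup>+x. ennreal (measure (measure_pmf (N x)) X) \<partial>M)"
    by (subst emeasure_bind_pmf) (simp add: measure_pmf.emeasure_eq_measure)
  also have "\<dots> = ennreal (\<integral>x. measure (measure_pmf (N x)) X \<partial>measure_pmf M)"
    by (rule nn_integral_eq_integral[OF int]) auto
  finally show ?thesis
    by (simp add: measure_pmf.emeasure_eq_measure integral_nonneg_AE)
qed

lemma bern_if:
  assumes "0 \<le> a" "a \<le> 1"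
  shows "measure (measure_pmf (bind_pmf (bernoulli_pmf a) F)) X
         = a * measure (measure_pmf (F True)) X + (1 - a) * measure (measure_pmf (F False)) X"
  using assms by (simp add: measure_bind_pmf')

lemma integrable_pmf_bounded:
  fixes g :: "'a \<Rightarrow> real"
  assumes "\<And>x. x \<in> set_pmf M \<Longrightarrow> \<bar>g x\<bar> \<le> B"
  shows "integrable (measure_pmf M) g"
  by (rule measure_pmf.integrable_const_bound[where B=B]) (use assms in \<open>auto simp: AE_measure_pmf_iff\<close>)

lemma int01:
  fixes g :: "'a \<Rightarrow> real"
  assumes "\<And>x. x \<in> set_pmf M \<Longrightarrow> 0 \<le> g x \<and> g x \<le> 1"
  shows "0 \<le> (\<integral>x. g x \<partial>M) \<and> (\<integral>x. g x \<partial>M) \<le> 1"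
proof -
  have int: "integrable (measure_pmf M) g"
    by (rule integrable_pmf_bounded[where B=1]) (use assms in force)
  have "0 \<le> (\<integral>x. g x \<partial>M)"
    by (rule integral_nonneg_AE) (use assms in \<open>auto simp: AE_measure_pmf_iff\<close>)
  moreover have "(\<integral>x. g x \<partial>M) \<le> (\<integral>x. 1 \<partial>M)"
    by (rule integral_mono_AE[OF int]) (use assms in \<open>auto simp: AE_measure_pmf_iff\<close>)
  ultimately show ?thesis by simp
qed

lemma bind_bern_avg:
  assumes "\<And>x. x \<in> set_pmf M \<Longrightarrow> 0 \<le> g x \<and> g x \<le> 1"
  shows "bind_pmf M (\<lambda>x. bernoulli_pmf (g x)) = bernoulli_pmf (\<integral>x. g x \<partial>M)"
proof -
  have int: "integrable (measure_pmf M) g"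
    by (rule integrable_pmf_bounded[where B=1]) (use assms in force)
  have I: "0 \<le> (\<integral>x. g x \<partial>M) \<and> (\<integral>x. g x \<partial>M) \<le> 1" by (rule int01) (use assms in auto)
  show ?thesis
  proof (rule pmf_eqI)
    fix i :: bool
    have "pmf (bind_pmf M (\<lambda>x. bernoulli_pmf (g x))) i = (\<integral>x. pmf (bernoulli_pmf (g x)) i \<partial>M)"
      by (rule pmf_bind)
    also have "\<dots> = (\<integral>x. (if i then g x else 1 - g x) \<partial>M)"
      by (rule integral_cong_AE) (use assms in \<open>auto simp: AE_measure_pmf_iff\<close>)
    also have "\<dots> = pmf (bernoulli_pmf (\<integral>x. g x \<partial>M)) i"
      using I int by (cases i) (auto simp: integral_diff)
    finally show "pmf (bind_pmf M (\<lambda>x. bernoulli_pmf (g x))) i = pmf (bernoulli_pmf (\<integral>x. g x \<partial>M)) i" .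
  qed
qed

lemma int_close:
  fixes h :: "'a \<Rightarrow> real"
  assumes "\<And>x. x \<in> insert z (set_pmf M) \<Longrightarrow> 0 \<le> h x \<and> h x \<le> 1"
  shows "\<bar>(\<integral>x. h x \<partial>M) - h z\<bar> \<le> 1 - pmf M z"
proof -
  have int: "integrable (measure_pmf M) h"
    by (rule integrable_pmf_bounded[where B=1]) (use assms in force)
  have int2: "integrable (measure_pmf M) (\<lambda>x. h x - h z)"
    using int by auto
  have "(\<integral>x. h x \<partial>M) - h z = (\<integral>x. (h x - h z) \<partial>M)"
    using int by (simp add: integral_diff)
  also have "\<bar>\<dots>\<bar> \<le> (\<integral>x. \<bar>h x - h z\<bar> \<partial>M)"
    using integral_norm_bound[of M "\<lambda>x. h x - h z"] by simp
  also have "\<dots> \<le> (\<integral>x. indicator (- {z}) x \<partial>M)"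
  proof (rule integral_mono_AE)
    show "integrable (measure_pmf M) (\<lambda>x. \<bar>h x - h z\<bar>)" using int2 by auto
    show "integrable (measure_pmf M) (indicator (- {z}) :: 'a \<Rightarrow> real)"
      by (rule integrable_pmf_bounded[where B=1]) (auto split: split_indicator)
    show "AE x in measure_pmf M. \<bar>h x - h z\<bar> \<le> indicator (- {z}) x"
      unfolding AE_measure_pmf_iff
    proof
      fix x assume "x \<in> set_pmf M"
      then have "0 \<le> h x \<and> h x \<le> 1" "0 \<le> h z \<and> h z \<le> 1" using assms by auto
      then show "\<bar>h x - h z\<bar> \<le> indicator (- {z}) x" by (auto split: split_indicator)
    qed
  qed
  also have "\<dots> = measure (measure_pmf M) (- {z})" by simp
  also have "\<dots> = 1 - pmf M z"
    using measure_pmf.prob_compl[of "{z}" M] by (simp add: Compl_eq_Diff_UNIV measure_pmf_single)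
  finally show ?thesis .
qed

lemma int2_close:
  fixes h :: "'a \<Rightarrow> 'b \<Rightarrow> real"
  assumes "\<And>w u. w \<in> insert z1 (set_pmf M) \<Longrightarrow> u \<in> insert z2 (set_pmf U) \<Longrightarrow> 0 \<le> h w u \<and> h w u \<le> 1"
  shows "\<bar>(\<integral>w. (\<integral>u. h w u \<partial>U) \<partial>M) - h z1 z2\<bar> \<le> (1 - pmf M z1) + (1 - pmf U z2)"
proof -
  have G: "0 \<le> (\<integral>u. h w u \<partial>U) \<and> (\<integral>u. h w u \<partial>U) \<le> 1" if "w \<in> insert z1 (set_pmf M)" for w
    by (rule int01) (use assms that in auto)
  have 1: "\<bar>(\<integral>w. (\<integral>u. h w u \<partial>U) \<partial>M) - (\<integral>u. h z1 u \<partial>U)\<bar> \<le> 1 - pmf M z1"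
    by (rule int_close[where h="\<lambda>w. \<integral>u. h w u \<partial>U"]) (use G in auto)
  have 2: "\<bar>(\<integral>u. h z1 u \<partial>U) - h z1 z2\<bar> \<le> 1 - pmf U z2"
    by (rule int_close) (use assms in auto)
  from 1 2 show ?thesis by linarith
qed

lemma int_pos:
  fixes g :: "'a \<Rightarrow> real"
  assumes "finite (set_pmf M)" "\<And>x. x \<in> set_pmf M \<Longrightarrow> 0 < g x"
  shows "0 < (\<integral>x. g x \<partial>M)"
proof -
  have "(\<integral>x. g x \<partial>M) = (\<Sum>a\<in>set_pmf M. g a * pmf M a)"
    by (rule integral_measure_pmf_real) (use assms in auto)
  also have "\<dots> > 0"
  proof (rule sum_pos)
    show "finite (set_pmf M)" by fact
    show "set_pmf M \<noteq> {}" by (rule set_pmf_not_empty)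
    show "\<And>i. i \<in> set_pmf M \<Longrightarrow> 0 < g i * pmf M i"
      using assms by (auto simp: set_pmf_iff intro!: mult_pos_pos)
  qed
  finally show ?thesis .
qed

lemma meas_insert:
  assumes "x \<notin> A"
  shows "measure (measure_pmf P) (insert x A) = pmf P x + measure (measure_pmf P) A"
proof -
  have "measure (measure_pmf P) ({x} \<union> A) = measure (measure_pmf P) {x} + measure (measure_pmf P) A"
    by (rule measure_pmf.finite_measure_Union) (use assms in auto)
  then show ?thesis by (simp add: measure_pmf_single)
qed



definition tailp :: "nat pmf \<Rightarrow> nat \<Rightarrow> real" where
  "tailp P k = measure (measure_pmf P) {k<..}"

lemma tl_Suc: "tailp P k = pmf P (Suc k) + tailp P (Suc k)"
proof -
  have "{k<..} = insert (Suc k) {Suc k<..}" by auto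
  then show ?thesis unfolding tailp_def by (simp add: meas_insert)
qed

lemma tl_0: "1 = pmf P 0 + tailp P 0"
proof -
  have "UNIV = insert 0 {0::nat<..}" by auto
  then have "measure (measure_pmf P) UNIV = pmf P 0 + tailp P 0"
    unfolding tailp_def by (metis greaterThan_iff less_irrefl meas_insert)
  then show ?thesis by simp
qed

lemma pmf_tl: "k \<ge> 1 \<Longrightarrow> pmf P k = tailp P (k - 1) - tailp P k"
  using tl_Suc[of P "k - 1"] by simp

function fB :: "(nat\<Rightarrow>real) \<Rightarrow> (nat\<Rightarrow>real) \<Rightarrow> real \<Rightarrow> nat \<Rightarrow> nat \<Rightarrow> real" where
  "fB p q \<rho> J k = (if J \<le> k then \<rho>^k else
      fB p q \<rho> J (Suc k) + q (Suc (Suc k)) * (fB p q \<rho> J (Suc k) - fB p q \<rho> J (Suc (Suc k))) / (2 * p (Suc k) + 1))"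
  by auto
termination by (relation "Wellfounded.measure (\<lambda>(p,q,\<rho>,J,k). J - k)") auto

declare fB.simps[simp del]

fun wB :: "(nat\<Rightarrow>real) \<Rightarrow> (nat\<Rightarrow>real) \<Rightarrow> nat \<Rightarrow> real" where
  "wB p q 0 = 0"
| "wB p q (Suc 0) = 1"
| "wB p q (Suc (Suc k)) = wB p q (Suc k) * p (Suc k) / q (Suc (Suc k))"

lemma summable_if_pmf: "summable (\<lambda>n. if n \<in> A then pmf (P::nat pmf) n else (0::real))"
proof -
  have h: "summable (\<lambda>n. if n \<in> A then norm (pmf P n) else 0)"
    using pmf_abs_summable[of P A] abs_summable_on_nat_iff by blast
  show ?thesis by (rule summable_comparison_test[OF _ h]) auto
qed

lemma tv_bound:
  fixes P Q :: "nat pmf"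
  assumes "summable B" "\<And>i. \<bar>pmf P i - pmf Q i\<bar> \<le> B i"
  shows "tv_dist P Q \<le> suminf B"
  unfolding tv_dist_def
proof (rule cSUP_least)
  show "UNIV \<noteq> {}" by simp
  fix A :: "nat set"
  define gP where "gP = (\<lambda>n. if n \<in> A then pmf P n else 0)"
  define gQ where "gQ = (\<lambda>n. if n \<in> A then pmf Q n else 0)"
  have sP: "summable gP" unfolding gP_def by (rule summable_if_pmf)
  have sQ: "summable gQ" unfolding gQ_def by (rule summable_if_pmf)
  have eP: "measure (measure_pmf P) A = suminf gP"
    unfolding gP_def measure_pmf_conv_infsetsum by (rule infsetsum_nat) auto
  have eQ: "measure (measure_pmf Q) A = suminf gQ"
    unfolding gQ_def measure_pmf_conv_infsetsum by (rule infsetsum_nat) auto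
  have d: "suminf gP - suminf gQ = (\<Sum>n. gP n - gQ n)"
    using suminf_diff[OF sP sQ] by simp
  have b: "\<bar>gP n - gQ n\<bar> \<le> B n" for n
    using assms(2)[of n] assms(1) unfolding gP_def gQ_def
    by (auto simp: abs_le_iff)
  have "(\<Sum>n. gP n - gQ n) \<le> suminf B"
    by (rule suminf_le) (use b sP sQ assms(1) in \<open>auto simp: abs_le_iff intro: summable_diff\<close>)
  moreover have "- suminf B \<le> (\<Sum>n. gP n - gQ n)"
  proof -
    have "(\<Sum>n. - B n) \<le> (\<Sum>n. gP n - gQ n)"
      by (rule suminf_le) (use b sP sQ assms(1) in \<open>auto simp: abs_le_iff intro: summable_diff summable_minus\<close>, smt (verit) b abs_le_iff)
    then show ?thesis using suminf_minus[OF assms(1)] by simp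
  qed
  ultimately show "\<bar>measure_pmf.prob P A - measure_pmf.prob Q A\<bar> \<le> suminf B"
    using eP eQ d by linarith
qed



lemma abs3:
  fixes a b c x y z :: real
  assumes "0 \<le> a" "0 \<le> b" "0 \<le> c"
  shows "\<bar>a * x + b * y + c * z\<bar> \<le> a * \<bar>x\<bar> + b * \<bar>y\<bar> + c * \<bar>z\<bar>"
proof -
  have 1: "\<bar>a*x+b*y+c*z\<bar> \<le> \<bar>a*x+b*y\<bar> + \<bar>c*z\<bar>" by (rule abs_triangle_ineq)
  have 2: "\<bar>a*x+b*y\<bar> \<le> \<bar>a*x\<bar> + \<bar>b*y\<bar>" by (rule abs_triangle_ineq)
  have 3: "\<bar>a*x\<bar> = a*\<bar>x\<bar>" "\<bar>b*y\<bar> = b*\<bar>y\<bar>" "\<bar>c*z\<bar> = c*\<bar>z\<bar>"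
    using assms by (simp_all add: abs_mult)
  show ?thesis using 1 2 3 by linarith
qed

locale bdc =
  fixes K :: "nat \<Rightarrow> nat pmf" and p q :: "nat \<Rightarrow> real" and pl ql :: real
  assumes Kmeas: "\<And>m A. 1 \<le> m \<Longrightarrow> measure (measure_pmf (K m)) A
      = p m * indicator A (Suc m) + q m * indicator A (m - 1) + (1 - p m - q m) * indicator A m"
  and q1: "q (Suc 0) = 0"
  and qpos: "\<And>m. 2 \<le> m \<Longrightarrow> 0 < q m"
  and pnn: "\<And>m. 1 \<le> m \<Longrightarrow> 0 \<le> p m"
  and coef: "\<And>m. 1 \<le> m \<Longrightarrow> p m + q (Suc m) \<le> 1"
  and plim: "p \<longlonglongrightarrow> pl" and qlim: "q \<longlonglongrightarrow> ql" and pq: "3 * pl < 2 * ql"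
begin

lemma K_supp: assumes "1 \<le> m" shows "set_pmf (K m) \<subseteq> {1..}"
proof -
  have "pmf (K m) 0 = 0"
  proof -
    have "pmf (K m) 0 = p m * indicator {0} (Suc m) + q m * indicator {0} (m - 1) + (1 - p m - q m) * indicator {0::nat} m"
      using Kmeas[OF assms, of "{0}"] by (simp add: measure_pmf_single)
    also have "\<dots> = 0"
    proof (cases "m = 1")
      case True then show ?thesis using q1 by simp
    next
      case False then show ?thesis using assms by (simp add: indicator_def)
    qed
    finally show ?thesis .
  qed
  then show ?thesis by (auto simp: set_pmf_eq) (metis Suc_leI not_gr0)
qed

lemma bind_supp: "set_pmf \<nu> \<subseteq> {1..} \<Longrightarrow> set_pmf (bind_pmf \<nu> K) \<subseteq> {1..}"
  using K_supp by (fastforce simp: set_bind_pmf)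

lemma kpow_supp: "1 \<le> x \<Longrightarrow> set_pmf (kpow K n x) \<subseteq> {1..}"
proof (induction n)
  case (Suc n) then show ?case using bind_supp[of "kpow K n x"] by simp
qed simp

lemma tl0: assumes "set_pmf P \<subseteq> {1..}" shows "tailp P 0 = 1"
proof -
  have "pmf P 0 = 0" using assms by (meson atLeast_iff not_one_le_zero set_pmf_iff subsetD)
  then show ?thesis using tl_0[of P] by simp
qed

lemma pmf0: fixes P :: "nat pmf" assumes "set_pmf P \<subseteq> {1..}" shows "pmf P 0 = 0"
proof (rule ccontr)
  assume "pmf P 0 \<noteq> 0" then have "0 \<in> set_pmf P" by (simp add: set_pmf_iff)
  with assms show False by auto
qed

lemma tail_rec:
  assumes sup: "set_pmf \<nu> \<subseteq> {1..}"
  shows "tailp (bind_pmf \<nu> K) k = tailp \<nu> k + p k * pmf \<nu> k - q (Suc k) * pmf \<nu> (Suc k)"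
proof -
  have "tailp (bind_pmf \<nu> K) k = (\<integral>m. measure (measure_pmf (K m)) {k<..} \<partial>\<nu>)"
    by (simp add: tailp_def measure_bind_pmf')
  also have "\<dots> = (\<integral>m. (indicator {k<..} m + p k * indicator {k} m - q (Suc k) * indicator {Suc k} m) \<partial>\<nu>)"
  proof (rule integral_cong_AE)
    show "AE m in measure_pmf \<nu>. measure (measure_pmf (K m)) {k<..} =
        indicator {k<..} m + p k * indicator {k} m - q (Suc k) * indicator {Suc k} m"
      unfolding AE_measure_pmf_iff
    proof
      fix m assume "m \<in> set_pmf \<nu>"
      then have m1: "1 \<le> m" using sup by auto
      have "measure (measure_pmf (K m)) {k<..} = p m * indicator {k<..} (Suc m) + q m * indicator {k<..} (m - 1) + (1 - p m - q m) * indicator {k<..} m"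
        by (rule Kmeas[OF m1])
      also have "\<dots> = indicator {k<..} m + p k * indicator {k} m - q (Suc k) * indicator {Suc k} m"
      proof -
        consider "m < k" | "m = k" | "m = Suc k" | "Suc k < m" by linarith
        then show ?thesis
        proof cases
          case 1 then show ?thesis by (auto simp: indicator_def)
        next
          case 2 then show ?thesis by (auto simp: indicator_def)
        next
          case 3 then show ?thesis by (auto simp: indicator_def)
        next
          case 4 then show ?thesis by (auto simp: indicator_def)
        qed
      qed
      finally show "measure (measure_pmf (K m)) {k<..} =
        indicator {k<..} m + p k * indicator {k} m - q (Suc k) * indicator {Suc k} m" .
    qed
  qed auto
  also have "\<dots> = tailp \<nu> k + p k * pmf \<nu> k - q (Suc k) * pmf \<nu> (Suc k)"
  proof -
    have i1: "integrable (measure_pmf \<nu>) (\<lambda>m. indicator A m :: real)" for A :: "nat set"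
      by (rule integrable_pmf_bounded[where B=1]) (auto split: split_indicator)
    have i2: "integrable (measure_pmf \<nu>) (\<lambda>m. c * indicator A m :: real)" for A :: "nat set" and c
      using i1 by auto
    show ?thesis
      using i1 i2 by (simp add: tailp_def integral_diff integral_add measure_pmf_single)
  qed
  finally show ?thesis .
qed

lemma pl_nn: "0 \<le> pl"
proof (rule LIMSEQ_le_const[OF plim])
  show "\<exists>N. \<forall>n\<ge>N. 0 \<le> p n" using pnn by (intro exI[of _ 1]) auto
qed

lemma ql_pos: "0 < ql" using pl_nn pq by linarith

lemma ratio_lt: "pl / ql < 2/3" using pl_nn ql_pos pq by (simp add: divide_less_eq)

lemma inv_measure: "\<exists>\<mu> Ct. set_pmf \<mu> \<subseteq> {1..} \<and> bind_pmf \<mu> K = \<mu> \<and> (\<forall>k. tailp \<mu> k \<le> Ct * (2/3)^k)"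
proof -
  define w where "w = wB p q"
  define \<sigma> :: real where "\<sigma> = (pl / ql + 2/3) / 2"
  define \<rho> :: real where "\<rho> = 2/3"
  have \<sigma>pos: "0 < \<sigma>" using pl_nn ql_pos unfolding \<sigma>_def by (simp add: add_nonneg_pos)
  have \<sigma>\<rho>: "\<sigma> < \<rho>" using ratio_lt unfolding \<sigma>_def \<rho>_def by simp
  have w_db: "p k * w k = q (Suc k) * w (Suc k)" for k
  proof (cases k)
    case 0 then show ?thesis using q1 by (simp add: w_def)
  next
    case (Suc j)
    have "q (Suc (Suc j)) > 0" by (rule qpos) simp
    then show ?thesis using Suc by (simp add: w_def)
  qed
  have w_nn2: "0 \<le> w k \<and> 0 \<le> w (Suc k)" for k
  proof (induction k)
    case 0 then show ?case by (simp add: w_def)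
  next
    case (Suc k)
    have "q (Suc (Suc k)) > 0" by (rule qpos) simp
    moreover have "0 \<le> p (Suc k)" by (rule pnn) simp
    ultimately show ?case using Suc by (simp add: w_def)
  qed
  have w_nn: "0 \<le> w k" for k using w_nn2 by blast
  have qlim': "(\<lambda>k. q (Suc k)) \<longlonglongrightarrow> ql" using qlim by (rule LIMSEQ_Suc)
  have rlim: "(\<lambda>k. p k / q (Suc k)) \<longlonglongrightarrow> pl / ql"
    by (rule tendsto_divide[OF plim qlim']) (use ql_pos in simp)
  have "pl / ql < \<sigma>" using ratio_lt unfolding \<sigma>_def by simp
  from order_tendstoD(2)[OF rlim this] obtain M0 where M0: "\<And>k. k \<ge> M0 \<Longrightarrow> p k / q (Suc k) < \<sigma>"
    by (auto simp: eventually_sequentially)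
  define M where "M = max M0 1"
  have wstep: "w (Suc k) \<le> \<sigma> * w k" if "k \<ge> M" for k
  proof -
    have k1: "k \<ge> 1" using that by (simp add: M_def)
    obtain j where j: "k = Suc j" using k1 by (cases k) auto
    have "w (Suc k) = w k * (p k / q (Suc k))" using j by (simp add: w_def)
    also have "\<dots> \<le> w k * \<sigma>" using M0[of k] that w_nn[of k] unfolding M_def
      by (intro mult_left_mono) auto
    finally show ?thesis by (simp add: mult.commute)
  qed
  have geo: "w k \<le> w M * \<sigma>^(k - M)" if "M \<le> k" for k
    using that
  proof (induction k rule: dec_induct)
    case base then show ?case by simp
  next
    case (step k)
    have "w (Suc k) \<le> \<sigma> * w k" using \<open>M \<le> k\<close> by (rule wstep)
    also have "\<dots> \<le> \<sigma> * (w M * \<sigma>^(k - M))" using step.IH \<sigma>pos by (intro mult_left_mono) auto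
    also have "\<dots> = w M * \<sigma>^(Suc k - M)" using \<open>M \<le> k\<close> by (simp add: Suc_diff_le)
    finally show ?case .
  qed
  define Cw where "Cw = (\<Sum>j\<le>M. w j / \<sigma>^j)"
  have term_le: "w j / \<sigma>^j \<le> Cw" if "j \<le> M" for j
    unfolding Cw_def by (rule member_le_sum) (use that w_nn \<sigma>pos in auto)
  have wb: "w k \<le> Cw * \<sigma>^k" for k
  proof (cases "k \<le> M")
    case True
    then have "w k / \<sigma>^k \<le> Cw" by (rule term_le)
    then show ?thesis using \<sigma>pos by (simp add: divide_le_eq)
  next
    case False
    have "w k \<le> w M * \<sigma>^(k - M)" using False by (intro geo) auto
    also have "\<dots> = (w M / \<sigma>^M) * \<sigma>^k"
    proof -
      have "\<sigma>^k = \<sigma>^M * \<sigma>^(k - M)" using False by (simp add: power_add[symmetric])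
      then show ?thesis using \<sigma>pos by simp
    qed
    also have "\<dots> \<le> Cw * \<sigma>^k" using term_le[of M] \<sigma>pos by (intro mult_right_mono) auto
    finally show ?thesis .
  qed
  have \<sigma>1: "\<sigma> < 1" using \<sigma>\<rho> unfolding \<rho>_def by simp
  have sgeo: "summable (\<lambda>k. Cw * \<sigma>^k)"
    by (rule summable_mult, rule summable_geometric) (use \<sigma>pos \<sigma>1 in simp)
  have sw: "summable w"
    by (rule summable_comparison_test'[OF sgeo]) (use w_nn wb in simp)
  define Z where "Z = suminf w"
  have "sum w {1} \<le> suminf w" by (rule sum_le_suminf[OF sw]) (use w_nn in auto)
  then have Z1: "1 \<le> Z" unfolding Z_def by (simp add: w_def)
  have f0: "\<And>k. 0 \<le> w k / Z" using w_nn Z1 by simp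
  have prob: "(\<integral>\<^sup>+x. ennreal (w x / Z) \<partial>count_space UNIV) = 1"
  proof -
    have "(\<integral>\<^sup>+x. ennreal (w x / Z) \<partial>count_space UNIV) = (\<Sum>x. ennreal (w x / Z))"
      by (rule nn_integral_count_space_nat)
    also have "\<dots> = ennreal (\<Sum>x. w x / Z)"
      by (rule suminf_ennreal2[OF f0 summable_divide[OF sw]])
    also have "(\<Sum>x. w x / Z) = 1" using suminf_divide[OF sw, of Z] Z1 unfolding Z_def by simp
    finally show ?thesis by simp
  qed
  define \<mu> where "\<mu> = embed_pmf (\<lambda>x. w x / Z)"
  have pmf\<mu>: "pmf \<mu> k = w k / Z" for k
    unfolding \<mu>_def by (rule pmf_embed_pmf[OF f0 prob])
  have sup\<mu>: "set_pmf \<mu> \<subseteq> {1..}"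
  proof
    fix x assume "x \<in> set_pmf \<mu>"
    then have "pmf \<mu> x \<noteq> 0" by (simp add: set_pmf_iff)
    then have "x \<noteq> 0" using pmf\<mu>[of 0] by (metis div_0 w_def wB.simps(1))
    then show "x \<in> {1..}" by simp
  qed
  have inv: "bind_pmf \<mu> K = \<mu>"
  proof -
    have tleq: "tailp (bind_pmf \<mu> K) k = tailp \<mu> k" for k
    proof -
      have "p k * pmf \<mu> k = q (Suc k) * pmf \<mu> (Suc k)"
        using w_db[of k] by (simp add: pmf\<mu>)
      then show ?thesis using tail_rec[OF sup\<mu>, of k] by simp
    qed
    have sb: "set_pmf (bind_pmf \<mu> K) \<subseteq> {1..}" by (rule bind_supp[OF sup\<mu>])
    show ?thesis
    proof (rule pmf_eqI)
      fix i
      show "pmf (bind_pmf \<mu> K) i = pmf \<mu> i"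
      proof (cases "i = 0")
        case True then show ?thesis using pmf0[OF sb] pmf0[OF sup\<mu>] by simp
      next
        case False then show ?thesis using pmf_tl[of i] tleq by simp
      qed
    qed
  qed
  define Ct where "Ct = Cw / Z * (1 / (1 - \<sigma> / \<rho>))"
  have tlb: "tailp \<mu> k \<le> Ct * \<rho>^k" for k
  proof -
    have "tailp \<mu> k = (\<Sum>n. if n \<in> {k<..} then pmf \<mu> n else 0)"
      unfolding tailp_def measure_pmf_conv_infsetsum by (rule infsetsum_nat) auto
    also have "\<dots> \<le> (\<Sum>n. (Cw / Z * \<rho>^k) * (\<sigma>/\<rho>)^n)"
    proof (rule suminf_le)
      show "summable (\<lambda>n. if n \<in> {k<..} then pmf \<mu> n else 0)" by (rule summable_if_pmf)
      show "summable (\<lambda>n. (Cw / Z * \<rho>^k) * (\<sigma>/\<rho>)^n)"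
        by (rule summable_mult, rule summable_geometric) (use \<sigma>pos \<sigma>\<rho> in \<open>simp add: \<rho>_def\<close>)
      fix n
      show "(if n \<in> {k<..} then pmf \<mu> n else 0) \<le> (Cw / Z * \<rho>^k) * (\<sigma>/\<rho>)^n"
      proof (cases "k < n")
        case True
        have "pmf \<mu> n = w n / Z" by (rule pmf\<mu>)
        also have "\<dots> \<le> Cw * \<sigma>^n / Z" using wb[of n] Z1 by (simp add: divide_right_mono)
        also have "\<sigma>^n = \<rho>^n * (\<sigma>/\<rho>)^n" by (simp add: \<rho>_def power_divide)
        also have "\<rho>^n \<le> \<rho>^k" using True by (intro power_decreasing) (auto simp: \<rho>_def)
        then have "Cw * (\<rho>^n * (\<sigma>/\<rho>)^n) / Z \<le> Cw * (\<rho>^k * (\<sigma>/\<rho>)^n) / Z"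
          using Z1 term_le[of 0] w_nn[of 0] \<sigma>pos
          by (intro divide_right_mono mult_left_mono mult_right_mono) (auto simp: \<rho>_def)
        finally show ?thesis using True by (simp add: mult_ac)
      next
        case False
        have "0 \<le> Cw" using term_le[of 0] w_nn[of 0] by simp
        then show ?thesis using False Z1 \<sigma>pos by (auto simp: \<rho>_def)
      qed
    qed
    also have "\<dots> = Ct * \<rho>^k"
      using suminf_mult[OF summable_geometric[of "\<sigma>/\<rho>"], of "Cw / Z * \<rho>^k"] suminf_geometric[of "\<sigma>/\<rho>"]
        \<sigma>pos \<sigma>\<rho> unfolding Ct_def by (simp add: \<rho>_def)
    finally show ?thesis .
  qed
  show ?thesis using sup\<mu> inv tlb unfolding \<rho>_def by blast
qed

lemma f_constr: "\<exists>f \<alpha>. (\<forall>k. 0 < f k) \<and> (\<forall>k. f (Suc k) \<le> f k) \<and> 0 \<le> \<alpha> \<and> \<alpha> < 1 \<and>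
   (\<forall>k\<ge>1. p k * f (k-1) + (1 - p k - q (Suc k)) * f k + q (Suc k) * f (Suc k) \<le> \<alpha> * f k) \<and>
   summable f \<and> (\<exists>c>0. \<forall>k. c * (2/3)^k \<le> f k)"
proof -
  define \<rho> :: real where "\<rho> = 2/3"
  have \<rho>: "0 < \<rho>" "\<rho> < 1" by (auto simp: \<rho>_def)
  define E where "E = (\<lambda>k. p k / \<rho> + (1 - p k - q (Suc k)) + q (Suc k) * \<rho>)"
  define El where "El = pl / \<rho> + (1 - pl - ql) + ql * \<rho>"
  have qlim': "(\<lambda>k. q (Suc k)) \<longlonglongrightarrow> ql" using qlim by (rule LIMSEQ_Suc)
  have Elim: "E \<longlonglongrightarrow> El" unfolding E_def El_def
    by (intro tendsto_intros plim qlim') (auto simp: \<rho>_def)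
  have El1: "El < 1" using pq unfolding El_def \<rho>_def by simp
  define \<alpha>0 where "\<alpha>0 = (1 + El) / 2"
  have "El < \<alpha>0" using El1 unfolding \<alpha>0_def by simp
  from order_tendstoD(2)[OF Elim this] obtain J0 where J0: "\<And>k. k \<ge> J0 \<Longrightarrow> E k < \<alpha>0"
    by (auto simp: eventually_sequentially)
  define J where "J = max J0 1"
  have J1: "1 \<le> J" by (simp add: J_def)
  define f where "f = fB p q \<rho> J"
  have f_geo: "f k = \<rho>^k" if "J \<le> k" for k
    using that unfolding f_def by (subst fB.simps) simp
  have f_rec: "f k = f (Suc k) + q (Suc (Suc k)) * (f (Suc k) - f (Suc (Suc k))) / (2 * p (Suc k) + 1)"
    if "k < J" for k
    using that unfolding f_def by (subst fB.simps) simp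
  have fprop: "\<forall>k. J - k = d \<longrightarrow> 0 < f (Suc k) \<and> f (Suc k) < f k" for d
  proof (induction d)
    case 0
    show ?case
    proof (intro allI impI)
      fix k assume "J - k = 0"
      then have "J \<le> k" by simp
      then show "0 < f (Suc k) \<and> f (Suc k) < f k" using f_geo[of k] f_geo[of "Suc k"] \<rho> by simp
    qed
  next
    case (Suc d)
    show ?case
    proof (intro allI impI)
      fix k assume kd: "J - k = Suc d"
      then have kJ: "k < J" by simp
      have "J - Suc k = d" using kd by simp
      then have IH: "0 < f (Suc (Suc k)) \<and> f (Suc (Suc k)) < f (Suc k)" using Suc.IH by blast
      have qp: "0 < q (Suc (Suc k))" by (rule qpos) simp
      have pp: "0 \<le> p (Suc k)" by (rule pnn) simp
      have "0 < q (Suc (Suc k)) * (f (Suc k) - f (Suc (Suc k))) / (2 * p (Suc k) + 1)"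
        using qp pp IH by (intro divide_pos_pos mult_pos_pos) auto
      then show "0 < f (Suc k) \<and> f (Suc k) < f k" using f_rec[OF kJ] IH by linarith
    qed
  qed
  have fpos1: "0 < f (Suc k)" and fdec: "f (Suc k) < f k" for k using fprop[of "J - k"] by auto
  have fpos: "0 < f k" for k using fpos1[of k] fdec[of k] by linarith
  have fanti: "f n' \<le> f n" if "n \<le> n'" for n n'
    by (rule lift_Suc_antimono_le[of f, OF _ that]) (use fdec less_imp_le in blast)
  define L where "L = (\<lambda>k. p k * f (k-1) + (1 - p k - q (Suc k)) * f k + q (Suc k) * f (Suc k))"
  have Llt: "L k < f k" if kk: "1 \<le> k" "k \<le> J" for k
  proof -
    obtain j where j: "k = Suc j" using kk by (cases k) auto
    have jJ: "j < J" using kk j by simp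
    define D where "D = f k - f (Suc k)"
    have Dpos: "0 < D" using fdec[of k] unfolding D_def by simp
    have qp: "0 < q (Suc k)" by (rule qpos) (use j in simp)
    have pp: "0 \<le> p k" by (rule pnn) (use kk in simp)
    define X where "X = q (Suc k) * D"
    have Xpos: "0 < X" unfolding X_def using qp Dpos by simp
    have fj: "f (k - 1) = f k + X / (2 * p k + 1)"
      using f_rec[OF jJ] j unfolding X_def D_def by simp
    have "L k = f k + p k * (X / (2 * p k + 1)) - X"
      unfolding L_def fj X_def D_def by (simp add: algebra_simps)
    moreover have "p k * (X / (2 * p k + 1)) < X"
    proof -
      have "p k * (X / (2 * p k + 1)) = X * (p k / (2 * p k + 1))" by simp
      also have "\<dots> < X * 1"
        using pp Xpos by (intro mult_strict_left_mono) (auto simp: divide_less_eq)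
      finally show ?thesis by simp
    qed
    ultimately show ?thesis by simp
  qed
  have Lge: "L k \<le> \<alpha>0 * f k" if kJ: "J < k" for k
  proof -
    have k1: "J \<le> k - 1" using that by simp
    have e: "f (k - 1) = \<rho>^(k-1)" "f k = \<rho>^k" "f (Suc k) = \<rho>^(Suc k)"
      using f_geo k1 that by auto
    obtain j where j: "k = Suc j" using kJ J1 by (cases k) auto
    have "L k = \<rho>^k * E k"
      unfolding L_def E_def e using \<rho> j by (simp add: field_simps)
    also have "\<dots> \<le> \<rho>^k * \<alpha>0" using J0[of k] that \<rho> unfolding J_def
      by (intro mult_left_mono) auto
    finally show ?thesis using e by (simp add: mult.commute)
  qed
  define \<alpha> where "\<alpha> = max 0 (max \<alpha>0 (Max ((\<lambda>k. L k / f k) ` {1..J})))"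
  have Maxlt: "Max ((\<lambda>k. L k / f k) ` {1..J}) < 1"
    using J1 Llt fpos by (subst Max_less_iff) (auto simp: divide_less_eq)
  have \<alpha>01: "\<alpha>0 < 1" using El1 unfolding \<alpha>0_def by simp
  have \<alpha>1: "\<alpha> < 1" unfolding \<alpha>_def using Maxlt \<alpha>01 by simp
  have \<alpha>0: "0 \<le> \<alpha>" unfolding \<alpha>_def by simp
  have Lal: "L k \<le> \<alpha> * f k" if "1 \<le> k" for k
  proof (cases "k \<le> J")
    case True
    have "L k / f k \<le> Max ((\<lambda>k. L k / f k) ` {1..J})"
      using True that by (intro Max_ge) auto
    also have "\<dots> \<le> \<alpha>" unfolding \<alpha>_def by simp
    finally show ?thesis using fpos[of k] by (simp add: divide_le_eq)
  next
    case False
    have "L k \<le> \<alpha>0 * f k" using False by (intro Lge) simp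
    also have "\<dots> \<le> \<alpha> * f k" using fpos[of k] unfolding \<alpha>_def by (intro mult_right_mono) auto
    finally show ?thesis .
  qed
  have sf: "summable f"
  proof (rule summable_comparison_test'[where N=J])
    show "summable (\<lambda>k. \<rho>^k)" using \<rho> by (intro summable_geometric) simp
    show "norm (f n) \<le> \<rho>^n" if "J \<le> n" for n using f_geo[OF that] \<rho> by simp
  qed
  have lowb: "\<rho>^J * \<rho>^k \<le> f k" for k
  proof (cases "J \<le> k")
    case True
    have "\<rho>^J * \<rho>^k \<le> 1 * \<rho>^k" using \<rho> by (intro mult_right_mono) (auto simp: power_le_one)
    then show ?thesis using f_geo[OF True] by simp
  next
    case False
    have "\<rho>^J * \<rho>^k \<le> \<rho>^J * 1" using \<rho> by (intro mult_left_mono) (auto simp: power_le_one)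
    also have "\<dots> = f J" using f_geo[of J] by simp
    also have "\<dots> \<le> f k" using False by (intro fanti) simp
    finally show ?thesis .
  qed
  show ?thesis
    apply (rule exI[of _ f], rule exI[of _ \<alpha>])
    using fpos fdec \<alpha>0 \<alpha>1 Lal sf lowb \<rho>
    by (auto simp: L_def less_imp_le intro!: exI[of _ "\<rho>^J"]) (simp add: \<rho>_def)
qed

theorem bdc_ergodic: "geometrically_ergodic {m. m \<ge> 1} K"
proof -
  obtain \<mu> Ct where sup\<mu>: "set_pmf \<mu> \<subseteq> {1..}" and inv: "bind_pmf \<mu> K = \<mu>"
    and tlb: "\<And>k. tailp \<mu> k \<le> Ct * (2/3)^k"
    using inv_measure by blast
  obtain f \<alpha> c where fpos: "\<And>k. 0 < f k" and fdec: "\<And>k. f (Suc k) \<le> f k" and \<alpha>0: "0 \<le> \<alpha>"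
    and \<alpha>1: "\<alpha> < 1"
    and Lal: "\<And>k. k \<ge> 1 \<Longrightarrow> p k * f (k-1) + (1 - p k - q (Suc k)) * f k + q (Suc k) * f (Suc k) \<le> \<alpha> * f k"
    and sf: "summable f" and c: "c > 0" and lowb: "\<And>k. c * (2/3)^k \<le> f k"
    using f_constr by blast
  have fanti: "f n' \<le> f n" if "n \<le> n'" for n n'
    by (rule lift_Suc_antimono_le[of f, OF _ that]) (use fdec in blast)
  define C\<mu> where "C\<mu> = max 0 (Ct / c)"
  have C\<mu>0: "0 \<le> C\<mu>" unfolding C\<mu>_def by simp
  have tailp\<mu>: "tailp \<mu> k \<le> C\<mu> * f k" for k
  proof (cases "Ct \<ge> 0")
    case True
    have "tailp \<mu> k \<le> Ct * (2/3)^k" by (rule tlb)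
    also have "\<dots> = (Ct / c) * (c * (2/3)^k)" using c by simp
    also have "\<dots> \<le> (Ct / c) * f k" using True c lowb[of k] by (intro mult_left_mono) auto
    also have "\<dots> \<le> C\<mu> * f k" using fpos[of k] unfolding C\<mu>_def by (intro mult_right_mono) auto
    finally show ?thesis .
  next
    case False
    have "tailp \<mu> k \<le> Ct * (2/3)^k" by (rule tlb)
    also have "\<dots> \<le> 0" using False by (simp add: mult_nonpos_nonneg)
    also have "\<dots> \<le> C\<mu> * f k" using C\<mu>0 fpos[of k] by simp
    finally show ?thesis .
  qed
  have tlnn: "0 \<le> tailp P k" for P k unfolding tailp_def by simp
  define Fs where "Fs = (\<Sum>i. f (i - 1) + f i)"
  have sF: "summable (\<lambda>i. f (i - 1) + f i)"
  proof (rule summable_add)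
    show "summable (\<lambda>i. f (i - 1))" using sf by (subst summable_Suc_iff[symmetric]) simp
  qed (rule sf)
  have Fs0: "0 \<le> Fs" unfolding Fs_def by (rule suminf_nonneg[OF sF]) (use fpos less_imp_le in \<open>auto intro: add_nonneg_nonneg\<close>)
  have main: "tv_dist (kpow K n x) \<mu> \<le> Fs * (1 + 1 / f x + C\<mu>) * \<alpha>^n" if x1: "1 \<le> x" for x n
  proof -
    define P where "P = (\<lambda>n. kpow K n x)"
    define \<Delta> where "\<Delta> = (\<lambda>n k. tailp (P n) k - tailp \<mu> k)"
    have Psup: "set_pmf (P n) \<subseteq> {1..}" for n unfolding P_def by (rule kpow_supp[OF x1])
    have \<Delta>0: "\<Delta> n 0 = 0" for n unfolding \<Delta>_def using tl0[OF Psup] tl0[OF sup\<mu>] by simp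
    have \<Delta>rec: "\<Delta> (Suc n) k = (1 - p k - q (Suc k)) * \<Delta> n k + p k * \<Delta> n (k-1) + q (Suc k) * \<Delta> n (Suc k)"
      if k1: "1 \<le> k" for n k
    proof -
      have a: "tailp (P (Suc n)) k = tailp (P n) k + p k * pmf (P n) k - q (Suc k) * pmf (P n) (Suc k)"
        unfolding P_def using tail_rec[OF Psup[unfolded P_def], of n k] by simp
      have b: "tailp \<mu> k = tailp \<mu> k + p k * pmf \<mu> k - q (Suc k) * pmf \<mu> (Suc k)"
        using tail_rec[OF sup\<mu>, of k] inv by simp
      have c1: "pmf (P n) k = tailp (P n) (k-1) - tailp (P n) k" "pmf \<mu> k = tailp \<mu> (k-1) - tailp \<mu> k"
        using pmf_tl k1 by auto
      have c2: "pmf (P n) (Suc k) = tailp (P n) k - tailp (P n) (Suc k)" "pmf \<mu> (Suc k) = tailp \<mu> k - tailp \<mu> (Suc k)"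
        using pmf_tl by auto
      show ?thesis unfolding \<Delta>_def using a b c1 c2 by (simp add: algebra_simps)
    qed
    define S where "S = 1 / f x + C\<mu>"
    have S0: "0 \<le> S" unfolding S_def using fpos[of x] C\<mu>0 by simp
    have bound: "\<forall>k. \<bar>\<Delta> n k\<bar> \<le> \<alpha>^n * S * f k" for n
    proof (induction n)
      case 0
      show ?case
      proof
        fix k
        have "tailp (P 0) k = indicator {k<..} x" unfolding P_def tailp_def by simp
        then have "\<bar>\<Delta> 0 k\<bar> \<le> indicator {k<..} x + tailp \<mu> k"
          unfolding \<Delta>_def using tlnn[of \<mu> k] by (auto split: split_indicator)
        also have "indicator {k<..} x \<le> f k / f x"
          using fanti[of k x] fpos[of x] fpos[of k] by (auto split: split_indicator simp: le_divide_eq)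
        also have "tailp \<mu> k \<le> C\<mu> * f k" by (rule tailp\<mu>)
        finally show "\<bar>\<Delta> 0 k\<bar> \<le> \<alpha>^0 * S * f k" unfolding S_def by (simp add: algebra_simps)
      qed
    next
      case (Suc n)
      show ?case
      proof
        fix k
        show "\<bar>\<Delta> (Suc n) k\<bar> \<le> \<alpha>^(Suc n) * S * f k"
        proof (cases "k = 0")
          case True then show ?thesis using \<Delta>0 S0 \<alpha>0 fpos[of k] by simp
        next
          case False
          then have k1: "1 \<le> k" by simp
          have c0: "0 \<le> 1 - p k - q (Suc k)" using coef[OF k1] by simp
          have c1: "0 \<le> p k" by (rule pnn[OF k1])
          have c2: "0 \<le> q (Suc k)" using qpos[of "Suc k"] k1 by simp
          have "\<bar>\<Delta> (Suc n) k\<bar> \<le> (1 - p k - q (Suc k)) * \<bar>\<Delta> n k\<bar> + p k * \<bar>\<Delta> n (k-1)\<bar> + q (Suc k) * \<bar>\<Delta> n (Suc k)\<bar>"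
            unfolding \<Delta>rec[OF k1] by (rule abs3[OF c0 c1 c2])
          also have "\<dots> \<le> (1 - p k - q (Suc k)) * (\<alpha>^n * S * f k) + p k * (\<alpha>^n * S * f (k-1)) + q (Suc k) * (\<alpha>^n * S * f (Suc k))"
            using Suc.IH c0 c1 c2 by (intro add_mono mult_left_mono) auto
          also have "\<dots> = \<alpha>^n * S * (p k * f (k-1) + (1 - p k - q (Suc k)) * f k + q (Suc k) * f (Suc k))"
            by (simp add: algebra_simps)
          also have "\<dots> \<le> \<alpha>^n * S * (\<alpha> * f k)"
            using Lal[OF k1] S0 \<alpha>0 by (intro mult_left_mono) auto
          finally show ?thesis by (simp add: algebra_simps)
        qed
      qed
    qed
    have pd: "\<bar>pmf (P n) i - pmf \<mu> i\<bar> \<le> \<alpha>^n * S * (f (i - 1) + f i)" for i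
    proof (cases "i = 0")
      case True then show ?thesis using pmf0[OF Psup] pmf0[OF sup\<mu>] S0 \<alpha>0 fpos
        by (simp add: add_pos_pos less_imp_le)
    next
      case False
      then have "pmf (P n) i - pmf \<mu> i = \<Delta> n (i - 1) - \<Delta> n i" unfolding \<Delta>_def using pmf_tl by simp
      then have "\<bar>pmf (P n) i - pmf \<mu> i\<bar> \<le> \<bar>\<Delta> n (i - 1)\<bar> + \<bar>\<Delta> n i\<bar>" by simp
      also have "\<dots> \<le> \<alpha>^n * S * f (i - 1) + \<alpha>^n * S * f i" using bound[of n] by (intro add_mono) auto
      finally show ?thesis by (simp add: algebra_simps)
    qed
    have "tv_dist (P n) \<mu> \<le> (\<Sum>i. \<alpha>^n * S * (f (i - 1) + f i))"
      by (rule tv_bound[OF summable_mult[OF sF] pd])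
    also have "\<dots> = \<alpha>^n * S * Fs" unfolding Fs_def by (rule suminf_mult[OF sF])
    also have "\<dots> \<le> \<alpha>^n * (1 + 1 / f x + C\<mu>) * Fs"
      using \<alpha>0 Fs0 unfolding S_def by (intro mult_right_mono mult_left_mono) auto
    finally show ?thesis unfolding P_def by (simp add: mult_ac)
  qed
  show ?thesis
    unfolding geometrically_ergodic_def
  proof (intro exI conjI)
    show "set_pmf \<mu> \<subseteq> {m. m \<ge> 1}" using sup\<mu> by auto
    show "bind_pmf \<mu> K = \<mu>" by (rule inv)
    show "\<forall>x\<in>{m. m \<ge> 1}. 1 \<le> 1 + 1 / f x + C\<mu>" using fpos C\<mu>0 by (simp add: less_imp_le)
    show "\<alpha> < 1" by (rule \<alpha>1)
    show "\<forall>x\<in>{m. m \<ge> 1}. \<forall>n. tv_dist (kpow K n x) \<mu> \<le> Fs * (1 + 1 / f x + C\<mu>) * \<alpha>^n"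
      using main by auto
  qed
qed

end



lemma rU: assumes "1 \<le> m" "0 < \<theta>" "\<theta> < 1"
  shows "(pi_geom (int m + 1) * q_rw \<theta> (int m + 1) (int m)) / (pi_geom (int m) * q_rw \<theta> (int m) (int m + 1)) = (1-\<theta>)/(2*\<theta>)"
proof -
  have n: "nat (int m + 1) = Suc m" by simp
  have e1: "pi_geom (int m + 1) = (1/2)^(Suc m)" unfolding pi_geom_def n by simp
  have e2: "pi_geom (int m) = (1/2)^m" using assms by (simp add: pi_geom_def)
  have e3: "q_rw \<theta> (int m + 1) (int m) = 1 - \<theta>" "q_rw \<theta> (int m) (int m + 1) = \<theta>" by (simp_all add: q_rw_def)
  show ?thesis unfolding e1 e2 e3 using assms by (simp add: field_simps)
qed

lemma rD: assumes "2 \<le> m" "0 < \<theta>" "\<theta> < 1"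
  shows "(pi_geom (int m - 1) * q_rw \<theta> (int m - 1) (int m)) / (pi_geom (int m) * q_rw \<theta> (int m) (int m - 1)) = 2*\<theta>/(1-\<theta>)"
proof -
  have n: "nat (int m - 1) = m - 1" using assms by simp
  have e1: "pi_geom (int m - 1) = (1/2)^(m - 1)" using assms unfolding pi_geom_def n by simp
  have e2: "pi_geom (int m) = (1/2)^m" using assms by (simp add: pi_geom_def)
  have e4: "(1/2::real)^m = (1/2)^(m-1) / 2"
  proof -
    have "m = Suc (m - 1)" using assms by simp
    then have "(1/2::real)^m = (1/2)^(Suc (m-1))" by simp
    then show ?thesis by simp
  qed
  have e3: "q_rw \<theta> (int m - 1) (int m) = \<theta>" "q_rw \<theta> (int m) (int m - 1) = 1 - \<theta>" by (simp_all add: q_rw_def)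
  show ?thesis unfolding e1 e2 e3 e4 using assms by (simp add: field_simps)
qed

definition UPK where "UPK b \<epsilon> N c m y = bind_pmf (weight_pmf b \<epsilon> N m) (\<lambda>w. bind_pmf (weight_pmf b \<epsilon> N y)
   (\<lambda>u. bind_pmf (bernoulli_pmf (min 1 (c * (u / w)))) (\<lambda>acc. return_pmf (if acc then y else m))))"

lemma noisy_decomp:
  assumes m1: "1 \<le> m" and th: "0 < \<theta>" "\<theta> < 1"
  shows "noisy_mh \<theta> b \<epsilon> N m = bind_pmf (bernoulli_pmf \<theta>) (\<lambda>up. if up then UPK b \<epsilon> N ((1-\<theta>)/(2*\<theta>)) m (Suc m)
     else if m = 1 then return_pmf m else UPK b \<epsilon> N (2*\<theta>/(1-\<theta>)) m (m - 1))"
proof -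
  have m0: "m \<noteq> 0" using m1 by simp
  show ?thesis
  unfolding noisy_mh_def if_not_P[OF m0]
  proof (rule bind_pmf_cong[OF refl])
  fix up :: bool
  show "(let y = if up then int m + 1 else int m - 1 in
          if y \<le> 0 then return_pmf m
          else weight_pmf b \<epsilon> N m \<bind>
               (\<lambda>w. weight_pmf b \<epsilon> N (nat y) \<bind>
                     (\<lambda>u. bernoulli_pmf (min 1 (pi_geom y * q_rw \<theta> y (int m) / (pi_geom (int m) * q_rw \<theta> (int m) y) * (u / w))) \<bind>
                          (\<lambda>acc. return_pmf (if acc then nat y else m))))) =
         (if up then UPK b \<epsilon> N ((1-\<theta>)/(2*\<theta>)) m (Suc m)
          else if m = 1 then return_pmf m else UPK b \<epsilon> N (2*\<theta>/(1-\<theta>)) m (m - 1))"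
  proof (cases up)
    case True
    have y: "(if up then int m + 1 else int m - 1) = int m + 1" using True by simp
    have c: "\<not> int m + 1 \<le> 0" by simp
    have n: "nat (int m + 1) = Suc m" by simp
    show ?thesis unfolding y Let_def if_not_P[OF c] n rU[OF m1 th] UPK_def using True by simp
  next
    case False
    show ?thesis
    proof (cases "m = 1")
      case True then show ?thesis using False unfolding Let_def by simp
    next
      case m1': False
      then have m2: "2 \<le> m" using m1 by simp
      have y: "(if up then int m + 1 else int m - 1) = int m - 1" using False by simp
      have c: "\<not> int m - 1 \<le> 0" using m2 by simp
      have n: "nat (int m - 1) = m - 1" using m2 by simp
      show ?thesis unfolding y Let_def if_not_P[OF c] n rD[OF m2 th] UPK_def using False m1' by simp
    qed
  qed
  qed
qed

lemma nested_meas: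
  assumes h: "\<And>w u. w \<in> set_pmf M \<Longrightarrow> u \<in> set_pmf U \<Longrightarrow> 0 \<le> h w u \<and> h w u \<le> 1"
  shows "measure (measure_pmf (bind_pmf M (\<lambda>w. bind_pmf U (\<lambda>u. bind_pmf (bernoulli_pmf (h w u))
            (\<lambda>acc. return_pmf (if acc then y else z)))))) A
       = (\<integral>w. (\<integral>u. h w u \<partial>U) \<partial>M) * indicator A y + (1 - (\<integral>w. (\<integral>u. h w u \<partial>U) \<partial>M)) * indicator A z"
proof -
  define G where "G = (\<lambda>acc. return_pmf (if acc then y else z))"
  have G01: "0 \<le> (\<integral>u. h w u \<partial>U) \<and> (\<integral>u. h w u \<partial>U) \<le> 1" if "w \<in> set_pmf M" for w
    by (rule int01) (use h that in auto)
  have "bind_pmf M (\<lambda>w. bind_pmf U (\<lambda>u. bind_pmf (bernoulli_pmf (h w u)) G))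
      = bind_pmf M (\<lambda>w. bind_pmf (bind_pmf U (\<lambda>u. bernoulli_pmf (h w u))) G)"
    by (simp add: bind_assoc_pmf)
  also have "\<dots> = bind_pmf (bind_pmf M (\<lambda>w. bind_pmf U (\<lambda>u. bernoulli_pmf (h w u)))) G"
    by (simp add: bind_assoc_pmf)
  also have "bind_pmf M (\<lambda>w. bind_pmf U (\<lambda>u. bernoulli_pmf (h w u)))
      = bind_pmf M (\<lambda>w. bernoulli_pmf (\<integral>u. h w u \<partial>U))"
    by (rule bind_pmf_cong[OF refl], rule bind_bern_avg) (use h in auto)
  also have "\<dots> = bernoulli_pmf (\<integral>w. (\<integral>u. h w u \<partial>U) \<partial>M)"
    by (rule bind_bern_avg) (use G01 in auto)
  finally have eq: "bind_pmf M (\<lambda>w. bind_pmf U (\<lambda>u. bind_pmf (bernoulli_pmf (h w u)) G))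
      = bind_pmf (bernoulli_pmf (\<integral>w. (\<integral>u. h w u \<partial>U) \<partial>M)) G" .
  have I: "0 \<le> (\<integral>w. (\<integral>u. h w u \<partial>U) \<partial>M) \<and> (\<integral>w. (\<integral>u. h w u \<partial>U) \<partial>M) \<le> 1"
    by (rule int01) (use G01 in auto)
  show ?thesis unfolding G_def[symmetric] eq using I by (simp add: bern_if G_def)
qed

lemma W_facts:
  fixes b \<epsilon> :: "nat \<Rightarrow> real"
  assumes bm: "b m > 1" and em: "0 < \<epsilon> m" "\<epsilon> m \<le> 1" and N: "N \<ge> 1"
  defines "s \<equiv> (1 - \<epsilon> m) / (b m - \<epsilon> m)"
  shows "0 \<le> s" "s < 1" "s \<le> 1 / (b m - 1)" "finite (set_pmf (weight_pmf b \<epsilon> N m))"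
    "\<And>v. v \<in> set_pmf (weight_pmf b \<epsilon> N m) \<Longrightarrow> \<epsilon> m \<le> v"
    "(1 - s)^N \<le> pmf (weight_pmf b \<epsilon> N m) (\<epsilon> m)"
proof -
  have d: "0 < b m - \<epsilon> m" using bm em by simp
  show s0: "0 \<le> s" unfolding s_def using d em by simp
  show s1: "s < 1" unfolding s_def using d bm by (simp add: divide_less_eq)
  show "s \<le> 1 / (b m - 1)" unfolding s_def using d bm em
    by (intro frac_le) auto
  define g where "g = (\<lambda>k::nat. (b m - \<epsilon> m) / real N * real k + \<epsilon> m)"
  have W: "weight_pmf b \<epsilon> N m = map_pmf g (binomial_pmf N s)"
    unfolding weight_pmf_def g_def s_def by simp
  have fin: "finite (set_pmf (binomial_pmf N s))" using s0 s1 by (intro finite_set_pmf_binomial_pmf) auto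
  show "finite (set_pmf (weight_pmf b \<epsilon> N m))" unfolding W using fin by simp
  show "\<epsilon> m \<le> v" if vv: "v \<in> set_pmf (weight_pmf b \<epsilon> N m)" for v
  proof -
    obtain k where "v = g k" using vv unfolding W by auto
    moreover have "0 \<le> (b m - \<epsilon> m) / real N * real k" using d by simp
    ultimately show ?thesis unfolding g_def by simp
  qed
  have "pmf (weight_pmf b \<epsilon> N m) (\<epsilon> m) = measure (measure_pmf (binomial_pmf N s)) (g -` {\<epsilon> m})"
    unfolding W by (rule pmf_map)
  also have "\<dots> \<ge> measure (measure_pmf (binomial_pmf N s)) {0}"
    by (rule measure_pmf.finite_measure_mono) (auto simp: g_def)
  finally show "(1 - s)^N \<le> pmf (weight_pmf b \<epsilon> N m) (\<epsilon> m)"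
    using s0 s1 by (simp add: measure_pmf_single)
qed

lemma UPK_meas:
  assumes c: "0 < c" and w: "\<And>w. w \<in> set_pmf (weight_pmf b \<epsilon> N m) \<Longrightarrow> 0 < w"
    and u: "\<And>u. u \<in> set_pmf (weight_pmf b \<epsilon> N y) \<Longrightarrow> 0 < u"
  shows "measure (measure_pmf (UPK b \<epsilon> N c m y)) A =
    (\<integral>w. (\<integral>u. min 1 (c * (u / w)) \<partial>weight_pmf b \<epsilon> N y) \<partial>weight_pmf b \<epsilon> N m) * indicator A y +
    (1 - (\<integral>w. (\<integral>u. min 1 (c * (u / w)) \<partial>weight_pmf b \<epsilon> N y) \<partial>weight_pmf b \<epsilon> N m)) * indicator A m"
  unfolding UPK_def
proof (rule nested_meas[where h="\<lambda>w u. min 1 (c * (u / w))"])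
  fix w' u' assume "w' \<in> set_pmf (weight_pmf b \<epsilon> N m)" "u' \<in> set_pmf (weight_pmf b \<epsilon> N y)"
  then have "0 < w'" "0 < u'" using w u by auto
  then show "0 \<le> min 1 (c * (u' / w')) \<and> min 1 (c * (u' / w')) \<le> 1" using c by simp
qed

lemma UPK_int:
  assumes c: "0 < c" and w: "\<And>w. w \<in> set_pmf (weight_pmf b \<epsilon> N m) \<Longrightarrow> 0 < w"
    and u: "\<And>u. u \<in> set_pmf (weight_pmf b \<epsilon> N y) \<Longrightarrow> 0 < u"
    and fw: "finite (set_pmf (weight_pmf b \<epsilon> N m))" and fu: "finite (set_pmf (weight_pmf b \<epsilon> N y))"
  shows "0 < (\<integral>w. (\<integral>u. min 1 (c * (u / w)) \<partial>weight_pmf b \<epsilon> N y) \<partial>weight_pmf b \<epsilon> N m)"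
    "(\<integral>w. (\<integral>u. min 1 (c * (u / w)) \<partial>weight_pmf b \<epsilon> N y) \<partial>weight_pmf b \<epsilon> N m) \<le> 1"
proof -
  have h: "0 \<le> min 1 (c * (u' / w')) \<and> min 1 (c * (u' / w')) \<le> 1"
    if "w' \<in> set_pmf (weight_pmf b \<epsilon> N m)" "u' \<in> set_pmf (weight_pmf b \<epsilon> N y)" for w' u'
    using w[OF that(1)] u[OF that(2)] c by simp
  have G: "0 \<le> (\<integral>u. min 1 (c * (u / w')) \<partial>weight_pmf b \<epsilon> N y) \<and> (\<integral>u. min 1 (c * (u / w')) \<partial>weight_pmf b \<epsilon> N y) \<le> 1"
    if "w' \<in> set_pmf (weight_pmf b \<epsilon> N m)" for w'
    by (rule int01) (use h that in auto)
  show "(\<integral>w. (\<integral>u. min 1 (c * (u / w)) \<partial>weight_pmf b \<epsilon> N y) \<partial>weight_pmf b \<epsilon> N m) \<le> 1"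
    using int01[of "weight_pmf b \<epsilon> N m" "\<lambda>w. \<integral>u. min 1 (c * (u / w)) \<partial>weight_pmf b \<epsilon> N y"] G by auto
  show "0 < (\<integral>w. (\<integral>u. min 1 (c * (u / w)) \<partial>weight_pmf b \<epsilon> N y) \<partial>weight_pmf b \<epsilon> N m)"
  proof (rule int_pos[OF fw])
    fix w' assume w': "w' \<in> set_pmf (weight_pmf b \<epsilon> N m)"
    show "0 < (\<integral>u. min 1 (c * (u / w')) \<partial>weight_pmf b \<epsilon> N y)"
      by (rule int_pos[OF fu]) (use w[OF w'] u c in simp)
  qed
qed

lemma l_ge1:
  fixes \<epsilon> :: "nat \<Rightarrow> real"
  assumes pos: "\<And>m. m \<ge> 1 \<Longrightarrow> 0 < \<epsilon> m" and e0: "\<epsilon> \<longlonglongrightarrow> 0"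
    and r: "(\<lambda>m. \<epsilon> (m - 1) / \<epsilon> m) \<longlonglongrightarrow> l"
  shows "1 \<le> l"
proof (rule ccontr)
  assume "\<not> 1 \<le> l"
  then have "l < 1" by simp
  from order_tendstoD(2)[OF r this] obtain M0 where M0: "\<And>m. m \<ge> M0 \<Longrightarrow> \<epsilon> (m - 1) / \<epsilon> m < 1"
    by (auto simp: eventually_sequentially)
  define M where "M = max M0 1"
  have mono: "\<epsilon> M \<le> \<epsilon> m" if "M \<le> m" for m
    using that
  proof (induction m rule: dec_induct)
    case base then show ?case by simp
  next
    case (step k)
    have k1: "1 \<le> k" using step.hyps unfolding M_def by simp
    have "\<epsilon> (Suc k - 1) / \<epsilon> (Suc k) < 1" using M0[of "Suc k"] step.hyps unfolding M_def by simp
    then have "\<epsilon> k < \<epsilon> (Suc k)" using pos[of "Suc k"] by (simp add: divide_less_eq)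
    then show ?case using step.IH by simp
  qed
  have "0 < \<epsilon> M" using pos[of M] unfolding M_def by simp
  from order_tendstoD(2)[OF e0 this] obtain M1 where "\<And>m. m \<ge> M1 \<Longrightarrow> \<epsilon> m < \<epsilon> M"
    by (auto simp: eventually_sequentially)
  then have "\<epsilon> (max M M1) < \<epsilon> M" by simp
  moreover have "\<epsilon> M \<le> \<epsilon> (max M M1)" by (rule mono) simp
  ultimately show False by simp
qed

lemma pq_ineq:
  fixes \<theta> l :: real
  assumes "0 < \<theta>" "\<theta> < 1" "1 \<le> l"
  shows "3 * (\<theta> * min 1 ((1-\<theta>)/(2*\<theta>) * inverse l)) < 2 * ((1-\<theta>) * min 1 (2*\<theta>/(1-\<theta>) * l))"
proof -
  have a: "\<theta> * min 1 ((1-\<theta>)/(2*\<theta>) * inverse l) \<le> \<theta>" using assms by (simp add: mult_le_cancel_left1)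
  have b: "\<theta> * min 1 ((1-\<theta>)/(2*\<theta>) * inverse l) \<le> (1 - \<theta>) / 2"
  proof -
    have "\<theta> * min 1 ((1-\<theta>)/(2*\<theta>) * inverse l) \<le> \<theta> * ((1-\<theta>)/(2*\<theta>) * inverse l)"
      using assms by (intro mult_left_mono) auto
    also have "\<dots> = (1-\<theta>)/2 * inverse l" using assms by (simp add: field_simps)
    also have "\<dots> \<le> (1-\<theta>)/2 * 1" using assms by (intro mult_left_mono) (auto simp: inverse_le_1_iff)
    finally show ?thesis by simp
  qed
  show ?thesis
  proof (cases "1 \<le> 2*\<theta>/(1-\<theta>) * l")
    case True
    then have "min 1 (2*\<theta>/(1-\<theta>) * l) = 1" by simp
    then show ?thesis using b assms by simp
  next
    case False
    then have e: "min 1 (2*\<theta>/(1-\<theta>) * l) = 2*\<theta>/(1-\<theta>) * l" by simp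
    have "(1-\<theta>) * (2*\<theta>/(1-\<theta>) * l) = 2 * \<theta> * l" using assms by (simp add: field_simps)
    moreover have "2 * \<theta> \<le> 2 * \<theta> * l" using assms by simp
    ultimately show ?thesis using a e assms by simp
  qed
qed



theorem proposition3p13:
  fixes \<theta> :: real and b \<epsilon> :: "nat \<Rightarrow> real" and N :: nat
  assumes "0 < \<theta>" "\<theta> < 1"
    and "\<And>m. m \<ge> 1 \<Longrightarrow> b m > 1"
    and "\<And>m. m \<ge> 1 \<Longrightarrow> 0 < \<epsilon> m \<and> \<epsilon> m \<le> 1"
    and "filterlim b at_top sequentially"
    and "\<epsilon> \<longlonglongrightarrow> 0"
    and "(\<exists>l>0. (\<lambda>m. \<epsilon> (m - 1) / \<epsilon> m) \<longlonglongrightarrow> l)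
         \<or> filterlim (\<lambda>m. \<epsilon> (m - 1) / \<epsilon> m) at_top sequentially"
    and "N \<ge> 1"
  shows "geometrically_ergodic {m. m \<ge> 1} (noisy_mh \<theta> b \<epsilon> N)"
proof -
  note th = assms(1,2)
  note bpos = assms(3) and epos = assms(4) and blim = assms(5) and elim = assms(6)
    and rhyp = assms(7) and N1 = assms(8)
  define W where "W = weight_pmf b \<epsilon> N"
  define cU where "cU = (1-\<theta>)/(2*\<theta>)"
  define cD where "cD = 2*\<theta>/(1-\<theta>)"
  have cU: "0 < cU" and cD: "0 < cD" using th by (auto simp: cU_def cD_def)
  define aU where "aU = (\<lambda>m. (\<integral>w. (\<integral>u. min 1 (cU * (u / w)) \<partial>W (Suc m)) \<partial>W m))"
  define aD where "aD = (\<lambda>m. (\<integral>w. (\<integral>u. min 1 (cD * (u / w)) \<partial>W (m - 1)) \<partial>W m))"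
  define p where "p = (\<lambda>m. \<theta> * aU m)"
  define q where "q = (\<lambda>m. if m \<le> 1 then 0 else (1 - \<theta>) * aD m)"
  define s where "s = (\<lambda>m. (1 - \<epsilon> m) / (b m - \<epsilon> m))"
  define e where "e = (\<lambda>m. 1 - (1 - s m)^N)"
  have Wf: "0 \<le> s m" "s m < 1" "s m \<le> 1 / (b m - 1)" "finite (set_pmf (W m))"
    "\<And>v. v \<in> set_pmf (W m) \<Longrightarrow> \<epsilon> m \<le> v" "(1 - s m)^N \<le> pmf (W m) (\<epsilon> m)" if "1 \<le> m" for m
    using W_facts[of b m \<epsilon> N] bpos[OF that] epos[OF that] N1 unfolding W_def s_def by auto
  have Wpos: "0 < v" if "1 \<le> m" "v \<in> set_pmf (W m)" for m v
    using Wf(5)[OF that] epos[OF that(1)] by linarith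
  have aUb: "0 < aU m" "aU m \<le> 1" if "1 \<le> m" for m
    using UPK_int[OF cU, of b \<epsilon> N m "Suc m"] Wpos[OF that] Wpos[of "Suc m"] Wf(4)[OF that] Wf(4)[of "Suc m"]
    unfolding aU_def W_def by auto
  have aDb: "0 < aD m" "aD m \<le> 1" if "2 \<le> m" for m
  proof -
    have m1: "1 \<le> m" "1 \<le> m - 1" using that by auto
    show "0 < aD m" "aD m \<le> 1"
      using UPK_int[OF cD, of b \<epsilon> N m "m - 1"] Wpos[OF m1(1)] Wpos[OF m1(2)] Wf(4)[OF m1(1)] Wf(4)[OF m1(2)]
      unfolding aD_def W_def by auto
  qed
  have meas: "measure (measure_pmf (noisy_mh \<theta> b \<epsilon> N m)) A
      = p m * indicator A (Suc m) + q m * indicator A (m - 1) + (1 - p m - q m) * indicator A m"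
    if m1: "1 \<le> m" for m A
  proof -
    have up: "measure (measure_pmf (UPK b \<epsilon> N cU m (Suc m))) A = aU m * indicator A (Suc m) + (1 - aU m) * indicator A m"
      using UPK_meas[OF cU, of b \<epsilon> N m "Suc m" A] Wpos[OF m1] Wpos[of "Suc m"]
      unfolding aU_def W_def by auto
    have "measure (measure_pmf (noisy_mh \<theta> b \<epsilon> N m)) A
        = \<theta> * measure (measure_pmf (UPK b \<epsilon> N cU m (Suc m))) A
          + (1 - \<theta>) * measure (measure_pmf (if m = 1 then return_pmf m else UPK b \<epsilon> N cD m (m - 1))) A"
      unfolding noisy_decomp[OF m1 th] cU_def cD_def using th by (simp add: bern_if)
    also have "\<dots> = p m * indicator A (Suc m) + q m * indicator A (m - 1) + (1 - p m - q m) * indicator A m"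
    proof (cases "m = 1")
      case True
      then show ?thesis unfolding up p_def q_def by (simp add: algebra_simps)
    next
      case False
      then have m2: "2 \<le> m" "1 \<le> m - 1" using m1 by auto
      have dn: "measure (measure_pmf (UPK b \<epsilon> N cD m (m - 1))) A = aD m * indicator A (m - 1) + (1 - aD m) * indicator A m"
        using UPK_meas[OF cD, of b \<epsilon> N m "m - 1" A] Wpos[OF m1] Wpos[OF m2(2)]
        unfolding aD_def W_def by auto
      have dn': "measure (measure_pmf (if m = 1 then return_pmf m else UPK b \<epsilon> N cD m (m - 1))) A
          = aD m * indicator A (m - 1) + (1 - aD m) * indicator A m" using False dn by simp
      show ?thesis using False m2 unfolding up dn' p_def q_def by (simp add: algebra_simps)
    qed
    finally show ?thesis .
  qed
  have bl1: "filterlim (\<lambda>m. -1 + b m) at_top sequentially"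
    by (rule filterlim_tendsto_add_at_top[OF tendsto_const blim])
  have inv0: "(\<lambda>m. inverse (-1 + b m)) \<longlonglongrightarrow> 0" by (rule tendsto_inverse_0_at_top[OF bl1])
  have sl: "s \<longlonglongrightarrow> 0"
  proof (rule tendsto_sandwich[OF _ _ tendsto_const inv0])
    show "\<forall>\<^sub>F m in sequentially. 0 \<le> s m" using Wf(1) by (auto simp: eventually_sequentially intro!: exI[of _ 1])
    show "\<forall>\<^sub>F m in sequentially. s m \<le> inverse (-1 + b m)"
      using Wf(3) by (auto simp: eventually_sequentially divide_inverse intro!: exI[of _ 1])
  qed
  have el: "e \<longlonglongrightarrow> 0"
  proof -
    have "(\<lambda>m. 1 - (1 - s m)^N) \<longlonglongrightarrow> 1 - (1 - 0)^N" by (intro tendsto_intros sl)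
    then show ?thesis unfolding e_def by simp
  qed
  have eb: "1 - pmf (W m) (\<epsilon> m) \<le> e m" if "1 \<le> m" for m using Wf(6)[OF that] unfolding e_def by simp
  have e0: "0 \<le> e m" if "1 \<le> m" for m
  proof -
    have "(1 - s m)^N \<le> 1" using Wf(1,2)[OF that] by (intro power_le_one) auto
    then show ?thesis unfolding e_def by simp
  qed
  define hU where "hU = (\<lambda>m. min 1 (cU * (\<epsilon> (Suc m) / \<epsilon> m)))"
  define hD where "hD = (\<lambda>m. min 1 (cD * (\<epsilon> (m - 1) / \<epsilon> m)))"
  have h01: "0 \<le> min 1 (c * (u / w)) \<and> min 1 (c * (u / w)) \<le> 1" if "0 < c" "0 < u" "0 < w" for c u w :: real
    using that by simp
  have aUc: "aU \<longlonglongrightarrow> L" if hUl: "hU \<longlonglongrightarrow> L" for L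
  proof -
    have d: "(\<lambda>m. aU m - hU m) \<longlonglongrightarrow> 0"
    proof (rule Lim_null_comparison)
      show "(\<lambda>m. e m + e (Suc m)) \<longlonglongrightarrow> 0" using el LIMSEQ_Suc[OF el] by (intro tendsto_add_zero)
      show "\<forall>\<^sub>F m in sequentially. norm (aU m - hU m) \<le> e m + e (Suc m)"
        unfolding eventually_sequentially
      proof (intro exI allI impI)
        fix m :: nat assume m1: "1 \<le> m"
        have "\<bar>aU m - hU m\<bar> \<le> (1 - pmf (W m) (\<epsilon> m)) + (1 - pmf (W (Suc m)) (\<epsilon> (Suc m)))"
          unfolding aU_def hU_def
        proof (rule int2_close[where h="\<lambda>w u. min 1 (cU * (u / w))"])
          fix w u assume "w \<in> insert (\<epsilon> m) (set_pmf (W m))" "u \<in> insert (\<epsilon> (Suc m)) (set_pmf (W (Suc m)))"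
          then have "0 < w" "0 < u" using Wpos[OF m1] Wpos[of "Suc m"] epos[OF m1] epos[of "Suc m"] by auto
          then show "0 \<le> min 1 (cU * (u / w)) \<and> min 1 (cU * (u / w)) \<le> 1" using h01 cU by blast
        qed
        also have "\<dots> \<le> e m + e (Suc m)" using eb[OF m1] eb[of "Suc m"] by simp
        finally show "norm (aU m - hU m) \<le> e m + e (Suc m)" by simp
      qed
    qed
    have "(\<lambda>m. (aU m - hU m) + hU m) \<longlonglongrightarrow> 0 + L" by (intro tendsto_add d hUl)
    then show ?thesis by simp
  qed
  have aDc: "aD \<longlonglongrightarrow> L" if hDl: "hD \<longlonglongrightarrow> L" for L
  proof -
    have el1: "(\<lambda>m. e (m - 1)) \<longlonglongrightarrow> 0"
      by (rule filterlim_compose[OF el filterlim_minus_const_nat_at_top])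
    have d: "(\<lambda>m. aD m - hD m) \<longlonglongrightarrow> 0"
    proof (rule Lim_null_comparison)
      show "(\<lambda>m. e m + e (m - 1)) \<longlonglongrightarrow> 0" using el el1 by (intro tendsto_add_zero)
      show "\<forall>\<^sub>F m in sequentially. norm (aD m - hD m) \<le> e m + e (m - 1)"
        unfolding eventually_sequentially
      proof (intro exI allI impI)
        fix m :: nat assume m2: "2 \<le> m"
        have m1: "1 \<le> m" "1 \<le> m - 1" using m2 by auto
        have "\<bar>aD m - hD m\<bar> \<le> (1 - pmf (W m) (\<epsilon> m)) + (1 - pmf (W (m - 1)) (\<epsilon> (m - 1)))"
          unfolding aD_def hD_def
        proof (rule int2_close[where h="\<lambda>w u. min 1 (cD * (u / w))"])
          fix w u assume "w \<in> insert (\<epsilon> m) (set_pmf (W m))" "u \<in> insert (\<epsilon> (m - 1)) (set_pmf (W (m - 1)))"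
          then have "0 < w" "0 < u" using Wpos[OF m1(1)] Wpos[OF m1(2)] epos[OF m1(1)] epos[OF m1(2)] by auto
          then show "0 \<le> min 1 (cD * (u / w)) \<and> min 1 (cD * (u / w)) \<le> 1" using h01 cD by blast
        qed
        also have "\<dots> \<le> e m + e (m - 1)" using eb[OF m1(1)] eb[OF m1(2)] by simp
        finally show "norm (aD m - hD m) \<le> e m + e (m - 1)" by simp
      qed
    qed
    have "(\<lambda>m. (aD m - hD m) + hD m) \<longlonglongrightarrow> 0 + L" by (intro tendsto_add d hDl)
    then show ?thesis by simp
  qed
  have "\<exists>LU LD. hU \<longlonglongrightarrow> LU \<and> hD \<longlonglongrightarrow> LD \<and> 3 * (\<theta> * LU) < 2 * ((1 - \<theta>) * LD)"
    using rhyp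
  proof
    assume "\<exists>l>0. (\<lambda>m. \<epsilon> (m - 1) / \<epsilon> m) \<longlonglongrightarrow> l"
    then obtain l where l0: "l > 0" and rl: "(\<lambda>m. \<epsilon> (m - 1) / \<epsilon> m) \<longlonglongrightarrow> l" by blast
    have l1: "1 \<le> l" by (rule l_ge1[OF _ elim rl]) (use epos in auto)
    have rS: "(\<lambda>m. \<epsilon> (Suc m - 1) / \<epsilon> (Suc m)) \<longlonglongrightarrow> l" using LIMSEQ_Suc[OF rl] by simp
    have "(\<lambda>m. min 1 (cU * inverse (\<epsilon> (Suc m - 1) / \<epsilon> (Suc m)))) \<longlonglongrightarrow> min 1 (cU * inverse l)"
      using l0 by (intro tendsto_intros rS) auto
    then have hUl: "hU \<longlonglongrightarrow> min 1 (cU * inverse l)" unfolding hU_def by simp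
    have hDl: "hD \<longlonglongrightarrow> min 1 (cD * l)" unfolding hD_def by (intro tendsto_intros rl)
    show ?thesis using hUl hDl pq_ineq[OF th l1] unfolding cU_def cD_def by blast
  next
    assume rinf: "filterlim (\<lambda>m. \<epsilon> (m - 1) / \<epsilon> m) at_top sequentially"
    have rS: "filterlim (\<lambda>m. \<epsilon> (Suc m - 1) / \<epsilon> (Suc m)) at_top sequentially"
      by (rule filterlim_compose[OF rinf filterlim_Suc])
    have "(\<lambda>m. inverse (\<epsilon> (Suc m - 1) / \<epsilon> (Suc m))) \<longlonglongrightarrow> 0" by (rule tendsto_inverse_0_at_top[OF rS])
    then have "(\<lambda>m. min 1 (cU * inverse (\<epsilon> (Suc m - 1) / \<epsilon> (Suc m)))) \<longlonglongrightarrow> min 1 (cU * 0)"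
      by (intro tendsto_intros)
    then have hUl: "hU \<longlonglongrightarrow> 0" unfolding hU_def by simp
    have "\<forall>\<^sub>F m in sequentially. 1 / cD \<le> \<epsilon> (m - 1) / \<epsilon> m"
      using rinf unfolding filterlim_at_top by blast
    then have "\<forall>\<^sub>F m in sequentially. hD m = 1"
    proof (rule eventually_mono)
      fix m assume "1 / cD \<le> \<epsilon> (m - 1) / \<epsilon> m"
      then have "1 \<le> cD * (\<epsilon> (m - 1) / \<epsilon> m)" using cD by (simp add: divide_le_eq mult.commute)
      then show "hD m = 1" unfolding hD_def by simp
    qed
    then have hDl: "hD \<longlonglongrightarrow> 1" by (rule tendsto_eventually)
    show ?thesis using hUl hDl th by (intro exI[of _ 0] exI[of _ 1]) auto
  qed
  then obtain LU LD where hUl: "hU \<longlonglongrightarrow> LU" and hDl: "hD \<longlonglongrightarrow> LD"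
    and ineq: "3 * (\<theta> * LU) < 2 * ((1 - \<theta>) * LD)" by blast
  have plim: "p \<longlonglongrightarrow> \<theta> * LU" unfolding p_def by (intro tendsto_intros aUc hUl)
  have qlim: "q \<longlonglongrightarrow> (1 - \<theta>) * LD"
  proof (rule Lim_transform_eventually)
    show "(\<lambda>m. (1 - \<theta>) * aD m) \<longlonglongrightarrow> (1 - \<theta>) * LD" by (intro tendsto_intros aDc hDl)
    show "\<forall>\<^sub>F m in sequentially. (1 - \<theta>) * aD m = q m"
      unfolding q_def eventually_sequentially by (intro exI[of _ 2]) auto
  qed
  have B: "bdc (noisy_mh \<theta> b \<epsilon> N) p q (\<theta> * LU) ((1 - \<theta>) * LD)"
  proof (unfold_locales)
    show "\<And>m A. 1 \<le> m \<Longrightarrow> measure (measure_pmf (noisy_mh \<theta> b \<epsilon> N m)) A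
      = p m * indicator A (Suc m) + q m * indicator A (m - 1) + (1 - p m - q m) * indicator A m"
      by (rule meas)
    show "q (Suc 0) = 0" unfolding q_def by simp
    show "\<And>m. 2 \<le> m \<Longrightarrow> 0 < q m" unfolding q_def using aDb th by auto
    show "\<And>m. 1 \<le> m \<Longrightarrow> 0 \<le> p m" unfolding p_def using aUb th by (auto intro: less_imp_le)
    show "\<And>m. 1 \<le> m \<Longrightarrow> p m + q (Suc m) \<le> 1"
    proof -
      fix m :: nat assume m1: "1 \<le> m"
      have "p m \<le> \<theta>" unfolding p_def using aUb(2)[OF m1] th by (simp add: mult_le_cancel_left1)
      moreover have "q (Suc m) \<le> 1 - \<theta>" unfolding q_def using aDb(2)[of "Suc m"] m1 th
        by (simp add: mult_le_cancel_left1)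
      ultimately show "p m + q (Suc m) \<le> 1" by simp
    qed
    show "p \<longlonglongrightarrow> \<theta> * LU" by (rule plim)
    show "q \<longlonglongrightarrow> (1 - \<theta>) * LD" by (rule qlim)
    show "3 * (\<theta> * LU) < 2 * ((1 - \<theta>) * LD)" by (rule ineq)
  qed
  show ?thesis by (rule bdc.bdc_ergodic[OF B])
qed


end
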